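(* For all $n\in\mathbb{N}$ and $\ell\ge1$ there is a constant $c_{n,\ell}>0$ such that for any two convex sets $X,Y\subset\mathbb{R}^n$ of equal volume with $B(o,1/\ell)\subset X,Y\subset B(o,\ell)$, $$|X\triangle Y|\le c_{n,\ell}\int_{\partial X}d(x,Y)\,d\mathcal H^{n-1}(x).$$
   Context: $o$ is the origin, $B(p,r)$ the open Euclidean ball, $|\cdot|$ Lebesgue measure, $\mathcal H^{n-1}$ the $(n-1)$-dimensional Hausdorff measure, and $d(x,Y)=\inf_{y\in Y}\|x-y\|_2$. *)

theory Defs
  imports "HOL-Analysis.Analysis"
begin

definition hausdorff_pre :: "nat \<Rightarrow> real \<Rightarrow> 'a::metric_space set \<Rightarrow> ennreal" where
  "hausdorff_pre s \<delta> A =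
     (INF C \<in> {C :: nat \<Rightarrow> 'a set. A \<subseteq> (\<Union>i. C i) \<and>
                 (\<forall>i. bounded (C i) \<and> diameter (C i) \<le> \<delta>)}.
        (\<Sum>i. ennreal (if C i = {} then 0
                        else unit_ball_vol (real s) * (diameter (C i) / 2) ^ s)))"

definition hausdorff_outer :: "nat \<Rightarrow> 'a::metric_space set \<Rightarrow> ennreal" where
  "hausdorff_outer s A = (SUP \<delta> \<in> {0<..}. hausdorff_pre s \<delta> A)"

definition hausdorff_measure :: "nat \<Rightarrow> 'a::metric_space measure" where
  "hausdorff_measure s =
     measure_of UNIV (lambda_system UNIV UNIV (hausdorff_outer s)) (hausdorff_outer s)"

end

theory Submission
  imports Defs "HOL-Analysis.Analysis"
begin

definition hw :: "nat \<Rightarrow> 'a::metric_space set \<Rightarrow> ennreal" where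
  "hw s C = ennreal (if C = {} then 0 else unit_ball_vol (real s) * (diameter C / 2) ^ s)"

definition hcov :: "real \<Rightarrow> 'a::metric_space set \<Rightarrow> (nat \<Rightarrow> 'a set) set" where
  "hcov \<delta> A = {C. A \<subseteq> (\<Union>i. C i) \<and> (\<forall>i. bounded (C i) \<and> diameter (C i) \<le> \<delta>)}"

lemma hpre_def2: "hausdorff_pre s \<delta> A = (INF C \<in> hcov \<delta> A. \<Sum>i. hw s (C i))"
  unfolding hausdorff_pre_def hcov_def hw_def by simp

lemma hpre_le: "C \<in> hcov \<delta> A \<Longrightarrow> hausdorff_pre s \<delta> A \<le> (\<Sum>i. hw s (C i))"
  unfolding hpre_def2 by (rule INF_lower)

lemma hpre_ge: "(\<And>C. C \<in> hcov \<delta> A \<Longrightarrow> c \<le> (\<Sum>i. hw s (C i))) \<Longrightarrow> c \<le> hausdorff_pre s \<delta> A"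
  unfolding hpre_def2 by (rule INF_greatest)

lemma hpre_mono: "A \<subseteq> B \<Longrightarrow> hausdorff_pre s \<delta> A \<le> hausdorff_pre s \<delta> B"
  by (rule hpre_ge, rule hpre_le) (auto simp: hcov_def intro: order_trans)

lemma hpre_anti: "\<delta> \<le> \<delta>' \<Longrightarrow> hausdorff_pre s \<delta>' A \<le> hausdorff_pre s \<delta> A"
  by (rule hpre_ge, rule hpre_le) (auto simp: hcov_def intro: order_trans)

lemma hpre_empty: "0 < \<delta> \<Longrightarrow> hausdorff_pre s \<delta> {} = 0"
proof -
  assume "0 < \<delta>"
  hence "(\<lambda>i. {}) \<in> hcov \<delta> ({}::'a set)" by (auto simp: hcov_def)
  from hpre_le[OF this, of s] show ?thesis by (simp add: hw_def)
qed

lemma houter_empty: "hausdorff_outer s ({}::'a::metric_space set) = 0"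
  unfolding hausdorff_outer_def by (simp add: hpre_empty)

lemma hpre_le_outer: "0 < \<delta> \<Longrightarrow> hausdorff_pre s \<delta> A \<le> hausdorff_outer s A"
  unfolding hausdorff_outer_def by (rule SUP_upper) auto

lemma houter_ge: "(\<And>\<delta>. 0 < \<delta> \<Longrightarrow> hausdorff_pre s \<delta> A \<le> c) \<Longrightarrow> hausdorff_outer s A \<le> c"
  unfolding hausdorff_outer_def by (rule SUP_least) auto

lemma houter_mono: "A \<subseteq> B \<Longrightarrow> hausdorff_outer s A \<le> hausdorff_outer s B"
  by (meson hpre_le_outer hpre_mono houter_ge order_trans)

lemma hpre_close:
  assumes "hausdorff_pre s \<delta> A < top" "0 < e"
  shows "\<exists>C\<in>hcov \<delta> A. (\<Sum>i. hw s (C i)) < hausdorff_pre s \<delta> A + e"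
proof -
  have "hausdorff_pre s \<delta> A < hausdorff_pre s \<delta> A + e"
    using assms by (simp add: ennreal_add_left_cancel_less)
  then show ?thesis unfolding hpre_def2 INF_less_iff[symmetric] by simp
qed

lemma ennreal_le_suminf: "(f::nat\<Rightarrow>ennreal) n \<le> suminf f"
  using sum_le_suminf[of f "{n}"] by (simp add: summableI)

lemma hpre_csub:
  fixes A :: "nat \<Rightarrow> 'a::metric_space set"
  shows "hausdorff_pre s \<delta> (\<Union>n. A n) \<le> (\<Sum>n. hausdorff_pre s \<delta> (A n))"
proof (rule ennreal_le_epsilon)
  fix e :: real assume fin: "(\<Sum>n. hausdorff_pre s \<delta> (A n)) < top" and e: "0 < e"
  have "\<forall>n. \<exists>C. C\<in>hcov \<delta> (A n) \<and> (\<Sum>i. hw s (C i)) < hausdorff_pre s \<delta> (A n) + ennreal (e * (1/2)^Suc n)"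
  proof
    fix n
    have "hausdorff_pre s \<delta> (A n) < top"
      using ennreal_le_suminf[of "\<lambda>n. hausdorff_pre s \<delta> (A n)" n] fin by (metis order_le_less_trans)
    from hpre_close[OF this, of "ennreal (e * (1/2)^Suc n)"] e show "\<exists>C. C\<in>hcov \<delta> (A n) \<and> (\<Sum>i. hw s (C i)) < hausdorff_pre s \<delta> (A n) + ennreal (e * (1/2)^Suc n)"
      by auto
  qed
  then obtain C where C: "\<And>n. C n \<in> hcov \<delta> (A n)"
    "\<And>n. (\<Sum>i. hw s (C n i)) < hausdorff_pre s \<delta> (A n) + ennreal (e * (1/2)^Suc n)"
    by metis
  define D where "D k = (case prod_decode k of (n, i) \<Rightarrow> C n i)" for k
  have "D \<in> hcov \<delta> (\<Union>n. A n)"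
  proof -
    have "A n \<subseteq> (\<Union>k. D k)" for n
    proof
      fix x assume "x \<in> A n"
      then obtain i where "x \<in> C n i" using C(1)[of n] by (auto simp: hcov_def)
      then have "x \<in> D (prod_encode (n, i))" by (simp add: D_def)
      then show "x \<in> (\<Union>k. D k)" by blast
    qed
    moreover have "bounded (D k) \<and> diameter (D k) \<le> \<delta>" for k
      using C(1) by (auto simp: D_def hcov_def split: prod.splits)
    ultimately show ?thesis by (auto simp: hcov_def)
  qed
  then have "hausdorff_pre s \<delta> (\<Union>n. A n) \<le> (\<Sum>k. hw s (D k))" by (rule hpre_le)
  also have "(\<Sum>k. hw s (D k)) = (\<Sum>n. \<Sum>i. hw s (C n i))"
    using suminf_ennreal_2dimen[of "\<lambda>n. \<Sum>i. hw s (C n i)" "\<lambda>(n,i). hw s (C n i)"]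
    by (simp add: D_def case_prod_beta)
  also have "\<dots> \<le> (\<Sum>n. hausdorff_pre s \<delta> (A n) + ennreal (e * (1/2)^Suc n))"
    by (intro suminf_le summableI less_imp_le C(2))
  also have "\<dots> = (\<Sum>n. hausdorff_pre s \<delta> (A n)) + (\<Sum>n. ennreal (e * (1/2)^Suc n))"
    by (simp add: suminf_add summableI)
  also have "(\<Sum>n. ennreal (e * (1/2)^Suc n)) = ennreal e"
  proof -
    have "(\<lambda>n. e * (1/2)^Suc n) sums e"
      using sums_mult[OF geometric_sums[of "1/2::real"], of "e/2"] by (simp add: field_simps)
    then show ?thesis using e by (subst suminf_ennreal2) (auto simp: sums_iff)
  qed
  finally show "hausdorff_pre s \<delta> (\<Union>n. A n) \<le> (\<Sum>n. hausdorff_pre s \<delta> (A n)) + ennreal e" .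
qed

lemma houter_csub:
  fixes A :: "nat \<Rightarrow> 'a::metric_space set"
  shows "hausdorff_outer s (\<Union>n. A n) \<le> (\<Sum>n. hausdorff_outer s (A n))"
proof (rule houter_ge)
  fix \<delta> :: real assume "0 < \<delta>"
  have "hausdorff_pre s \<delta> (\<Union>n. A n) \<le> (\<Sum>n. hausdorff_pre s \<delta> (A n))" by (rule hpre_csub)
  also have "\<dots> \<le> (\<Sum>n. hausdorff_outer s (A n))"
    by (intro suminf_le summableI hpre_le_outer \<open>0 < \<delta>\<close>)
  finally show "hausdorff_pre s \<delta> (\<Union>n. A n) \<le> (\<Sum>n. hausdorff_outer s (A n))" .
qed

lemma houter_oms: "outer_measure_space (UNIV :: 'a::metric_space set set) (hausdorff_outer s)"
  unfolding outer_measure_space_def positive_def increasing_def countably_subadditive_def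
  by (auto simp: houter_empty houter_mono houter_csub)

lemma houter_sub2: "hausdorff_outer s (A \<union> B) \<le> hausdorff_outer s A + hausdorff_outer s B"
proof -
  have "A \<union> B = (\<Union>n. (\<lambda>n::nat. if n = 0 then A else if n = 1 then B else {}) n)" by (auto split: if_splits)
  then have "hausdorff_outer s (A \<union> B) \<le> (\<Sum>n. hausdorff_outer s ((\<lambda>n. if n = 0 then A else if n = 1 then B else {}) n))"
    using houter_csub by metis
  also have "\<dots> = (\<Sum>n<2. hausdorff_outer s ((\<lambda>n::nat. if n = 0 then A else if n = 1 then B else {}) n))"
    by (rule suminf_finite) (auto simp: houter_empty)
  finally show ?thesis by (simp add: numeral_2_eq_2)
qed

lemma hw_empty[simp]: "hw s {} = 0" by (simp add: hw_def)

lemma hpre_sep: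
  assumes "\<delta> < \<eta>" "\<forall>a\<in>A. \<forall>b\<in>B. \<eta> \<le> dist a b" "0 \<le> \<delta>"
  shows "hausdorff_pre s \<delta> A + hausdorff_pre s \<delta> B \<le> hausdorff_pre s \<delta> (A \<union> B)"
proof (rule hpre_ge)
  fix C assume C: "C \<in> hcov \<delta> (A \<union> B)"
  define CA where "CA i = (if C i \<inter> A = {} then {} else C i)" for i
  define CB where "CB i = (if C i \<inter> B = {} then {} else C i)" for i
  have CA: "CA \<in> hcov \<delta> A" using C assms(3) unfolding hcov_def CA_def
    by (auto split: if_splits) (metis (no_types, lifting) UN_iff UnCI disjoint_iff subsetD)
  have CB: "CB \<in> hcov \<delta> B" using C assms(3) unfolding hcov_def CB_def
    by (auto split: if_splits) (metis (no_types, lifting) UN_iff UnCI disjoint_iff subsetD)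
  have trm: "hw s (CA i) + hw s (CB i) \<le> hw s (C i)" for i
  proof (cases "C i \<inter> A = {} \<or> C i \<inter> B = {}")
    case True then show ?thesis by (auto simp: CA_def CB_def)
  next
    case False
    then obtain a b where ab: "a \<in> C i" "a \<in> A" "b \<in> C i" "b \<in> B" by auto
    have "dist a b \<le> diameter (C i)"
      using C ab by (intro diameter_bounded_bound) (auto simp: hcov_def)
    also have "\<dots> \<le> \<delta>" using C by (auto simp: hcov_def)
    finally have "dist a b < \<eta>" using assms(1) by simp
    with assms(2) ab show ?thesis by force
  qed
  have "hausdorff_pre s \<delta> A + hausdorff_pre s \<delta> B \<le> (\<Sum>i. hw s (CA i)) + (\<Sum>i. hw s (CB i))"
    by (intro add_mono hpre_le CA CB)
  also have "\<dots> = (\<Sum>i. hw s (CA i) + hw s (CB i))" by (simp add: suminf_add summableI)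
  also have "\<dots> \<le> (\<Sum>i. hw s (C i))" by (intro suminf_le summableI trm)
  finally show "hausdorff_pre s \<delta> A + hausdorff_pre s \<delta> B \<le> (\<Sum>i. hw s (C i))" .
qed

lemma houter_sep:
  assumes "0 < \<eta>" "\<forall>a\<in>A. \<forall>b\<in>B. \<eta> \<le> dist a b"
  shows "hausdorff_outer s A + hausdorff_outer s B \<le> hausdorff_outer s (A \<union> B)"
proof -
  have "hausdorff_outer s A + hausdorff_outer s B
      = (SUP \<delta>1\<in>{0<..}. hausdorff_pre s \<delta>1 A + hausdorff_outer s B)"
    unfolding hausdorff_outer_def by (subst ennreal_SUP_add_left) auto
  also have "\<dots> \<le> hausdorff_outer s (A \<union> B)"
  proof (rule SUP_least)
    fix \<delta>1 :: real assume d1: "\<delta>1 \<in> {0<..}"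
    have "hausdorff_pre s \<delta>1 A + hausdorff_outer s B
        = (SUP \<delta>2\<in>{0<..}. hausdorff_pre s \<delta>1 A + hausdorff_pre s \<delta>2 B)"
      unfolding hausdorff_outer_def by (subst ennreal_SUP_add_right) auto
    also have "\<dots> \<le> hausdorff_outer s (A \<union> B)"
    proof (rule SUP_least)
      fix \<delta>2 :: real assume d2: "\<delta>2 \<in> {0<..}"
      define \<delta> where "\<delta> = min (min \<delta>1 \<delta>2) (\<eta>/2)"
      have dpos: "0 < \<delta>" using d1 d2 assms by (auto simp: \<delta>_def)
      have "hausdorff_pre s \<delta>1 A + hausdorff_pre s \<delta>2 B \<le> hausdorff_pre s \<delta> A + hausdorff_pre s \<delta> B"
        by (intro add_mono hpre_anti) (auto simp: \<delta>_def)
      also have "\<dots> \<le> hausdorff_pre s \<delta> (A \<union> B)"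
        using assms dpos by (intro hpre_sep) (auto simp: \<delta>_def)
      also have "\<dots> \<le> hausdorff_outer s (A \<union> B)" using dpos by (rule hpre_le_outer)
      finally show "hausdorff_pre s \<delta>1 A + hausdorff_pre s \<delta>2 B \<le> hausdorff_outer s (A \<union> B)" .
    qed
    finally show "hausdorff_pre s \<delta>1 A + hausdorff_outer s B \<le> hausdorff_outer s (A \<union> B)" .
  qed
  finally show ?thesis .
qed

lemma ennreal_tail_small:
  assumes "suminf (f::nat\<Rightarrow>ennreal) < top" "0 < e"
  shows "\<exists>j. (\<Sum>i. f (i + j)) \<le> ennreal e"
proof -
  define r where "r i = enn2real (f i)" for i
  have fi: "f i = ennreal (r i)" for i
  proof -
    have "f i < top" using ennreal_le_suminf[of f i] assms(1) by (metis order_le_less_trans)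
    then show ?thesis by (simp add: r_def)
  qed
  have r0: "0 \<le> r i" for i by (simp add: r_def)
  have "summable r"
    using assms(1) by (intro summable_suminf_not_top) (auto simp: r0 fi[abs_def])
  from suminf_exist_split[OF assms(2) this] obtain N where N: "\<And>n. n \<ge> N \<Longrightarrow> norm (\<Sum>i. r (i + n)) < e"
    by blast
  have "(\<Sum>i. f (i + N)) = ennreal (\<Sum>i. r (i + N))"
    unfolding fi using \<open>summable r\<close> r0
    by (subst suminf_ennreal2) (auto simp: summable_iff_shift)
  also have "\<dots> \<le> ennreal e" using N[of N] by (intro ennreal_leI) auto
  finally show ?thesis by blast
qed

lemma houter_sep_sum:
  fixes P :: "nat \<Rightarrow> 'a::metric_space set"
  assumes "\<And>N. \<exists>\<eta>>0. \<forall>a\<in>(\<Union>i<N. P i). \<forall>b\<in>P N. \<eta> \<le> dist a b"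
  shows "(\<Sum>i<N. hausdorff_outer s (P i)) \<le> hausdorff_outer s (\<Union>i<N. P i)"
proof (induction N)
  case 0 then show ?case by simp
next
  case (Suc N)
  obtain \<eta> where "\<eta> > 0" "\<forall>a\<in>(\<Union>i<N. P i). \<forall>b\<in>P N. \<eta> \<le> dist a b" using assms by blast
  then have "hausdorff_outer s (\<Union>i<N. P i) + hausdorff_outer s (P N) \<le> hausdorff_outer s ((\<Union>i<N. P i) \<union> P N)"
    by (rule houter_sep)
  moreover have "(\<Union>i<N. P i) \<union> P N = (\<Union>i<Suc N. P i)" by (auto simp: lessThan_Suc)
  ultimately show ?case using Suc.IH by simp (metis add_right_mono order_trans)
qed

lemma sum_even_odd_split:
  fixes f :: "nat \<Rightarrow> 'b::comm_monoid_add"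
  shows "(\<Sum>i<2*N. f i) = (\<Sum>i<N. f (2*i)) + (\<Sum>i<N. f (2*i+1))"
  by (induction N) (auto simp: algebra_simps)

lemma closed_lambda:
  fixes F :: "'a::metric_space set"
  assumes "closed F"
  shows "F \<in> lambda_system UNIV UNIV (hausdorff_outer s)"
  unfolding lambda_system_def
proof (intro CollectI conjI ballI UNIV_I)
  fix E :: "'a set"
  let ?\<mu> = "hausdorff_outer s"
  have ge: "?\<mu> E \<le> ?\<mu> (F \<inter> E) + ?\<mu> ((UNIV - F) \<inter> E)"
  proof -
    have "E = (F \<inter> E) \<union> ((UNIV - F) \<inter> E)" by auto
    then show ?thesis using houter_sub2 by metis
  qed
  have le: "?\<mu> (F \<inter> E) + ?\<mu> ((UNIV - F) \<inter> E) \<le> ?\<mu> E"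
  proof (cases "F = {} \<or> ?\<mu> E = top")
    case True
    then show ?thesis by (auto simp: houter_empty)
  next
    case False
    then have Fne: "F \<noteq> {}" and fin: "?\<mu> E < top" by (auto simp: top.not_eq_extremum)
    define d where "d x = infdist x F" for x
    define G where "G j = {x\<in>E. 1/(real j+1) \<le> d x}" for j :: nat
    define R where "R i = {x\<in>E. 1/(real i+2) \<le> d x \<and> d x < 1/(real i+1)}" for i :: nat
    have a: "?\<mu> (F \<inter> E) + ?\<mu> (G j) \<le> ?\<mu> E" for j
    proof -
      have "?\<mu> (F \<inter> E) + ?\<mu> (G j) \<le> ?\<mu> ((F \<inter> E) \<union> G j)"
      proof (rule houter_sep[of "1/(real j+1)"])
        show "\<forall>a\<in>F \<inter> E. \<forall>b\<in>G j. 1 / (real j + 1) \<le> dist a b"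
        proof (intro ballI)
          fix a b assume a: "a \<in> F \<inter> E" and b: "b \<in> G j"
          have "infdist b F \<le> dist b a" using a by (intro infdist_le) auto
          then show "1 / (real j + 1) \<le> dist a b" using b by (simp add: G_def d_def dist_commute)
        qed
      qed simp
      also have "\<dots> \<le> ?\<mu> E" by (rule houter_mono) (auto simp: G_def)
      finally show ?thesis .
    qed
    have c: "?\<mu> ((UNIV - F) \<inter> E) \<le> ?\<mu> (G j) + (\<Sum>i. ?\<mu> (R (i + j)))" for j
    proof -
      have "(UNIV - F) \<inter> E \<subseteq> G j \<union> (\<Union>i. R (i + j))"
      proof
        fix x assume x: "x \<in> (UNIV - F) \<inter> E"
        have dpos: "0 < d x" using x infdist_pos_not_in_closed[OF assms Fne] by (auto simp: d_def)
        show "x \<in> G j \<union> (\<Union>i. R (i + j))"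
        proof (cases "1/(real j+1) \<le> d x")
          case True then show ?thesis using x by (auto simp: G_def)
        next
          case False
          obtain n :: nat where n: "n > 0" "inverse (real n) < d x" using ex_inverse_of_nat_less[OF dpos] by auto
          have ex: "1/(real n+2) \<le> d x"
          proof -
            have h: "1/(real n+2) \<le> 1/real n" using n by (intro frac_le) auto
            show ?thesis using h n(2) unfolding inverse_eq_divide by linarith
          qed
          define i0 where "i0 = (LEAST i. 1/(real i+2) \<le> d x)"
          have i0: "1/(real i0+2) \<le> d x" unfolding i0_def by (rule LeastI[of _ n]) (rule ex)
          have ij: "j \<le> i0"
          proof (rule ccontr)
            assume "\<not> j \<le> i0"
            then have "real i0 + 2 \<le> real j + 1" by simp
            then have "1/(real j+1) \<le> 1/(real i0+2)" by (intro frac_le) auto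
            with i0 False show False by simp
          qed
          have lt: "d x < 1/(real i0+1)"
          proof (cases i0)
            case 0 then show ?thesis using ij False by simp
          next
            case (Suc k)
            have "\<not> 1/(real k+2) \<le> d x" using not_less_Least[of k "\<lambda>i. 1/(real i+2) \<le> d x"] Suc
              unfolding i0_def by simp
            then show ?thesis using Suc by (simp add: add.commute)
          qed
          have "x \<in> R ((i0 - j) + j)" using x i0 lt ij by (auto simp: R_def)
          then show ?thesis by blast
        qed
      qed
      then have "?\<mu> ((UNIV - F) \<inter> E) \<le> ?\<mu> (G j \<union> (\<Union>i. R (i + j)))" by (rule houter_mono)
      also have "\<dots> \<le> ?\<mu> (G j) + ?\<mu> (\<Union>i. R (i + j))" by (rule houter_sub2)
      also have "\<dots> \<le> ?\<mu> (G j) + (\<Sum>i. ?\<mu> (R (i + j)))" by (intro add_left_mono houter_csub)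
      finally show ?thesis .
    qed
    have half: "\<forall>N c. (\<Sum>i<N. ?\<mu> (R (2*i+c))) \<le> ?\<mu> E"
    proof (intro allI)
      fix N c
      have "(\<Sum>i<N. ?\<mu> (R (2*i+c))) \<le> ?\<mu> (\<Union>i<N. R (2*i+c))"
      proof (rule houter_sep_sum)
        fix M :: nat
        show "\<exists>\<eta>>0. \<forall>a\<in>(\<Union>i<M. R (2*i+c)). \<forall>b\<in>R (2*M+c). \<eta> \<le> dist a b"
        proof (cases M)
          case 0 then show ?thesis by (intro exI[of _ 1]) auto
        next
          case (Suc M')
          define \<eta> where "\<eta> = 1/(real (2*M+c)) - 1/(real (2*M+c)+1)"
          have "0 < \<eta>" unfolding \<eta>_def using Suc by (simp add: frac_less2)
          moreover have "\<eta> \<le> dist a b" if a: "a \<in> (\<Union>i<M. R (2*i+c))" and b: "b \<in> R (2*M+c)" for a b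
          proof -
            obtain i where i: "i < M" "1/(real (2*i+c)+2) \<le> d a" using a by (auto simp: R_def)
            have "real (2*i+c) + 2 \<le> real (2*M+c)" using i by simp
            then have "1/real (2*M+c) \<le> 1/(real (2*i+c)+2)" by (intro frac_le) auto
            then have da: "1/real (2*M+c) \<le> d a" using i by simp
            have db: "d b < 1/(real (2*M+c)+1)" using b by (auto simp: R_def)
            have "d a \<le> d b + dist a b" unfolding d_def by (rule infdist_triangle)
            then show ?thesis using da db unfolding \<eta>_def by simp
          qed
          ultimately show ?thesis by blast
        qed
      qed
      also have "\<dots> \<le> ?\<mu> E" by (rule houter_mono) (auto simp: R_def)
      finally show "(\<Sum>i<N. ?\<mu> (R (2*i+c))) \<le> ?\<mu> E" .
    qed
    have d: "(\<Sum>i. ?\<mu> (R i)) \<le> 2 * ?\<mu> E"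
    proof (rule suminf_le_const[OF summableI])
      fix n
      have "(\<Sum>i<n. ?\<mu> (R i)) \<le> (\<Sum>i<2*n. ?\<mu> (R i))" by (intro sum_mono2) auto
      also have "\<dots> = (\<Sum>i<n. ?\<mu> (R (2*i))) + (\<Sum>i<n. ?\<mu> (R (2*i+1)))" by (rule sum_even_odd_split)
      also have "\<dots> \<le> ?\<mu> E + ?\<mu> E" using spec[OF spec[OF half, of n], of 0] spec[OF spec[OF half, of n], of 1] by (intro add_mono) auto
      finally show "(\<Sum>i<n. ?\<mu> (R i)) \<le> 2 * ?\<mu> E" by (simp add: mult_2)
    qed
    have sfin: "(\<Sum>i. ?\<mu> (R i)) < top"
      using d fin by (metis ennreal_mult_less_top ennreal_numeral_less_top order_le_less_trans)
    show ?thesis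
    proof (rule ennreal_le_epsilon)
      fix e :: real assume "0 < e"
      from ennreal_tail_small[OF sfin this] obtain j where j: "(\<Sum>i. ?\<mu> (R (i + j))) \<le> ennreal e" by blast
      have "?\<mu> (F \<inter> E) + ?\<mu> ((UNIV - F) \<inter> E) \<le> ?\<mu> (F \<inter> E) + (?\<mu> (G j) + (\<Sum>i. ?\<mu> (R (i + j))))"
        by (intro add_left_mono c)
      also have "\<dots> = (?\<mu> (F \<inter> E) + ?\<mu> (G j)) + (\<Sum>i. ?\<mu> (R (i + j)))" by (simp add: add.assoc)
      also have "\<dots> \<le> ?\<mu> E + ennreal e" by (intro add_mono a j)
      finally show "?\<mu> (F \<inter> E) + ?\<mu> ((UNIV - F) \<inter> E) \<le> ?\<mu> E + ennreal e" .
    qed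
  qed
  from ge le show "?\<mu> (F \<inter> E) + ?\<mu> ((UNIV - F) \<inter> E) = ?\<mu> E" by (rule antisym[rotated])
qed

lemma hm_space:
  "measure_space (UNIV::'a::metric_space set) (lambda_system UNIV UNIV (hausdorff_outer s)) (hausdorff_outer s)"
proof -
  interpret sigma_algebra "UNIV::'a set" "UNIV :: 'a set set"
    using sigma_algebra_Pow[of "UNIV::'a set"] by simp
  show ?thesis by (rule caratheodory_lemma[OF houter_oms])
qed

lemma hm_sets: "sets (hausdorff_measure s :: 'a::metric_space measure) = lambda_system UNIV UNIV (hausdorff_outer s)"
proof -
  have ms: "measure_space (UNIV::'a set) (lambda_system UNIV UNIV (hausdorff_outer s)) (hausdorff_outer s)"
    by (rule hm_space)
  then have sa: "sigma_algebra (UNIV::'a set) (lambda_system UNIV UNIV (hausdorff_outer s))"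
    by (simp add: measure_space_def)
  show ?thesis unfolding hausdorff_measure_def
    using sa by (simp add: sets_measure_of sigma_algebra.sigma_sets_eq)
qed

lemma hm_emeasure: "A \<in> sets (hausdorff_measure s :: 'a::metric_space measure) \<Longrightarrow>
  emeasure (hausdorff_measure s) A = hausdorff_outer s A"
proof -
  assume A: "A \<in> sets (hausdorff_measure s :: 'a measure)"
  have ms: "measure_space (UNIV::'a set) (lambda_system UNIV UNIV (hausdorff_outer s)) (hausdorff_outer s)"
    by (rule hm_space)
  show ?thesis unfolding hausdorff_measure_def
    using ms A by (intro emeasure_measure_of_sigma) (auto simp: measure_space_def hm_sets)
qed

lemma hm_closed: "closed F \<Longrightarrow> F \<in> sets (hausdorff_measure s :: 'a::metric_space measure)"
  by (simp add: hm_sets closed_lambda)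

lemma hm_space_UNIV: "space (hausdorff_measure s :: 'a::metric_space measure) = UNIV"
  by (simp add: hausdorff_measure_def space_measure_of_conv)

lemma hm_open: "open F \<Longrightarrow> F \<in> sets (hausdorff_measure s :: 'a::metric_space measure)"
proof -
  assume "open F"
  then have "UNIV - F \<in> sets (hausdorff_measure s :: 'a measure)" by (intro hm_closed) (simp add: closed_def Compl_eq_Diff_UNIV double_diff)
  then have "UNIV - (UNIV - F) \<in> sets (hausdorff_measure s :: 'a measure)"
    using sets.compl_sets[of "UNIV - F" "hausdorff_measure s"] by (simp add: hm_space_UNIV)
  then show ?thesis by (simp add: double_diff)
qed

definition shell :: "real \<Rightarrow> real \<Rightarrow> 'a::euclidean_space set \<Rightarrow> 'a set" where
  "shell l h C = {t *\<^sub>R x | x t. x \<in> C \<and> norm x \<le> l \<and> 1 - h \<le> t \<and> t \<le> 1 \<and> 0 \<le> t}"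

lemma shell_mono: "C \<subseteq> D \<Longrightarrow> shell l h C \<subseteq> shell l h D"
  unfolding shell_def by blast

lemma shell_UN: "shell l h (\<Union>i. C i) = (\<Union>i. shell l h (C i))"
  unfolding shell_def by blast

lemma shell_balls:
  fixes C :: "'a::euclidean_space set"
  assumes l: "l \<ge> 1" and h: "0 < h" and C: "bounded C" and rho: "0 < \<rho>" "diameter C \<le> \<rho>"
  shows "\<exists>U \<in> sets borel. shell l h C \<subseteq> U \<and>
    emeasure lborel U \<le> ennreal ((l*h/\<rho> + 2) * (unit_ball_vol DIM('a) * (2*\<rho>)^DIM('a)))"
proof (cases "\<exists>x0\<in>C. norm x0 \<le> l")
  case False
  then have "shell l h C = {}" unfolding shell_def by auto
  then show ?thesis by (intro bexI[of _ "{}"]) auto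
next
  case True
  then obtain x0 where x0: "x0 \<in> C" "norm x0 \<le> l" by blast
  define m where "m = nat \<lceil>l*h/\<rho>\<rceil>"
  have lhr: "0 < l*h/\<rho>" using l h rho by simp
  have m1: "l*h/\<rho> \<le> real m" unfolding m_def by (rule real_nat_ceiling_ge)
  have m2: "real m \<le> l*h/\<rho> + 1" unfolding m_def using lhr by linarith
  have mpos: "0 < real m" using m1 lhr by linarith
  define tj where "tj j = 1 - h + real j * h / real m" for j :: nat
  define U where "U = (\<Union>j\<in>{..m}. cball (tj j *\<^sub>R x0) (2*\<rho>))"
  have Ub: "U \<in> sets borel" unfolding U_def by (intro sets.finite_UN) auto
  have sub: "shell l h C \<subseteq> U"
  proof
    fix p assume "p \<in> shell l h C"
    then obtain x t where p: "p = t *\<^sub>R x" and x: "x \<in> C" "norm x \<le> l" and t: "1 - h \<le> t" "t \<le> 1" "0 \<le> t"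
      unfolding shell_def by blast
    define u where "u = (t - (1-h)) * real m / h"
    have u0: "0 \<le> u" using t h mpos by (simp add: u_def)
    have um: "u \<le> real m" using t h mpos by (simp add: u_def field_simps)
    define j where "j = nat \<lfloor>u\<rfloor>"
    have j1: "real j \<le> u" "u < real j + 1" using u0 unfolding j_def by linarith+
    have jm: "j \<le> m" using j1 um by linarith
    have tt: "t = 1 - h + u * h / real m" using h mpos by (simp add: u_def field_simps)
    have d1: "0 \<le> t - tj j" using j1 h mpos unfolding tt tj_def by (simp add: field_simps mult_right_mono)
    have d2: "t - tj j \<le> h / real m"
    proof -
      have "t - tj j = (u - real j) * h / real m" unfolding tt tj_def by (simp add: diff_divide_distrib left_diff_distrib)
      also have "\<dots> \<le> 1 * h / real m" using j1 h mpos by (intro divide_right_mono mult_right_mono) auto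
      finally show ?thesis by simp
    qed
    have hm: "h / real m * l \<le> \<rho>"
    proof -
      have "l * h \<le> \<rho> * real m" using m1 rho by (simp add: field_simps)
      then show ?thesis using mpos by (simp add: field_simps)
    qed
    have "norm (p - tj j *\<^sub>R x0) = norm (t *\<^sub>R (x - x0) + (t - tj j) *\<^sub>R x0)"
      unfolding p by (simp add: algebra_simps)
    also have "\<dots> \<le> norm (t *\<^sub>R (x - x0)) + norm ((t - tj j) *\<^sub>R x0)" by (rule norm_triangle_ineq)
    also have "\<dots> = t * norm (x - x0) + (t - tj j) * norm x0" using t d1 by simp
    also have "\<dots> \<le> 1 * \<rho> + h / real m * l"
    proof (intro add_mono mult_mono)
      show "norm (x - x0) \<le> \<rho>" using diameter_bounded_bound[OF C x(1) x0(1)] rho by (simp add: dist_norm)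
    qed (use t d1 d2 x0 rho in auto)
    also have "\<dots> \<le> 2 * \<rho>" using hm by simp
    finally have "p \<in> cball (tj j *\<^sub>R x0) (2*\<rho>)" by (simp add: dist_norm norm_minus_commute)
    then show "p \<in> U" using jm unfolding U_def by blast
  qed
  have "emeasure lborel U \<le> (\<Sum>j\<in>{..m}. emeasure lborel (cball (tj j *\<^sub>R x0) (2*\<rho>)))"
    unfolding U_def by (intro emeasure_subadditive_finite) auto
  also have "\<dots> = (\<Sum>j\<in>{..m}. ennreal (unit_ball_vol DIM('a) * (2*\<rho>)^DIM('a)))"
    using rho by (simp add: emeasure_cball)
  also have "\<dots> = ennreal ((real m + 1) * (unit_ball_vol DIM('a) * (2*\<rho>)^DIM('a)))"
    using rho by (subst sum_ennreal) (auto simp: algebra_simps)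
  also have "\<dots> \<le> ennreal ((l*h/\<rho> + 2) * (unit_ball_vol DIM('a) * (2*\<rho>)^DIM('a)))"
    using m2 rho by (intro ennreal_leI mult_right_mono) auto
  finally show ?thesis using Ub sub by blast
qed

lemma shell_bound_aux:
  fixes V l h \<rho> :: real
  assumes "0 \<le> V" "l \<ge> 1" "0 < \<rho>" "\<rho> \<le> h"
  shows "(l*h/\<rho> + 2) * (V * (2*\<rho>)^Suc k) \<le> 3 * 2^Suc k * V * l * h * \<rho>^k"
proof -
  have e1: "(l*h/\<rho> + 2) * \<rho> = l*h + 2*\<rho>" using assms by (simp add: field_simps)
  have e2: "(2*\<rho>)^Suc k = 2^Suc k * \<rho>^k * \<rho>" by (simp add: power_mult_distrib)
  have "(l*h/\<rho> + 2) * (V * (2*\<rho>)^Suc k) = (V * 2^Suc k * \<rho>^k) * ((l*h/\<rho> + 2) * \<rho>)"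
    unfolding e2 by (simp add: algebra_simps)
  also have "\<dots> = (V * 2^Suc k * \<rho>^k) * (l*h + 2*\<rho>)" by (simp only: e1)
  also have "\<dots> \<le> (V * 2^Suc k * \<rho>^k) * (3*l*h)"
  proof (rule mult_left_mono)
    have "\<rho> \<le> l*h" using assms by (metis dual_order.trans mult_le_cancel_right1 less_le_trans order.strict_iff_not)
    then show "l*h + 2*\<rho> \<le> 3*l*h" by (simp only: mult.assoc)
  qed (use assms in simp)
  also have "\<dots> = 3 * 2^Suc k * V * l * h * \<rho>^k" by (simp add: algebra_simps)
  finally show ?thesis .
qed

lemma shell_one:
  fixes C :: "'a::euclidean_space set"
  assumes l: "l \<ge> 1" and h: "0 < h" and C: "bounded C" "diameter C \<le> h" and e: "0 < \<epsilon>"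
  shows "\<exists>U\<in>sets borel. shell l h C \<subseteq> U \<and>
    emeasure lborel U \<le> ennreal (3 * 2^DIM('a) * unit_ball_vol DIM('a) * l * h * diameter C ^ (DIM('a) - 1)) + ennreal \<epsilon>"
proof -
  have "DIM('a) \<noteq> 0" by simp
  then obtain k where n: "DIM('a) = Suc k" using not0_implies_Suc by blast
  define V where "V = unit_ball_vol (real DIM('a))"
  have V: "0 < V" by (simp add: V_def)
  define K where "K = 3 * 2^Suc k * V * l * h"
  have K: "0 < K" using V l h by (simp add: K_def)
  have d0: "0 \<le> diameter C" by (rule diameter_ge_0[OF C(1)])
  have gen: "\<exists>U\<in>sets borel. shell l h C \<subseteq> U \<and> emeasure lborel U \<le> ennreal (K * \<rho>^k)"
    if "0 < \<rho>" "\<rho> \<le> h" "diameter C \<le> \<rho>" for \<rho>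
  proof -
    from shell_balls[OF l h C(1) that(1) that(3)] obtain U where U: "U\<in>sets borel" "shell l h C \<subseteq> U"
      "emeasure lborel U \<le> ennreal ((l*h/\<rho> + 2) * (unit_ball_vol DIM('a) * (2*\<rho>)^DIM('a)))" by blast
    have "(l*h/\<rho> + 2) * (V * (2*\<rho>)^Suc k) \<le> K * \<rho>^k"
      unfolding K_def using shell_bound_aux[of V l \<rho> h k] V l that by simp
    then have "ennreal ((l*h/\<rho> + 2) * (unit_ball_vol DIM('a) * (2*\<rho>)^DIM('a))) \<le> ennreal (K * \<rho>^k)"
      unfolding n V_def by (intro ennreal_leI) simp
    then have "emeasure lborel U \<le> ennreal (K * \<rho>^k)"
      using U(3) by (rule order_trans[rotated])
    with U show ?thesis by blast
  qed
  have goal_eq: "3 * 2^DIM('a) * unit_ball_vol DIM('a) * l * h * diameter C ^ (DIM('a) - 1) = K * diameter C ^ k"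
    by (simp add: K_def V_def n)
  have plus: "\<And>x::ennreal. x \<le> x + ennreal \<epsilon>" by simp
  show ?thesis
  proof (cases "diameter C > 0")
    case True
    from gen[OF True C(2) order_refl] obtain U where U: "U\<in>sets borel" "shell l h C \<subseteq> U"
      "emeasure lborel U \<le> ennreal (K * diameter C ^ k)" by blast
    show ?thesis unfolding goal_eq by (intro bexI[of _ U] conjI U(2) U(1) order_trans[OF U(3) plus])
  next
    case False
    then have dz: "diameter C = 0" using d0 by simp
    show ?thesis
    proof (cases "k = 0")
      case True
      have "diameter C \<le> h" using dz h by simp
      from gen[OF h order_refl this] obtain U where U: "U\<in>sets borel" "shell l h C \<subseteq> U"
        "emeasure lborel U \<le> ennreal (K * h ^ k)" by blast
      have hk: "K * h ^ k = K * diameter C ^ k" using True by simp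
      show ?thesis unfolding goal_eq using order_trans[OF U(3) plus] unfolding hk by (intro bexI[of _ U] conjI U(2) U(1))
    next
      case False
      define \<rho> where "\<rho> = min (min h 1) (\<epsilon> / K)"
      have rp: "0 < \<rho>" using h e K by (simp add: \<rho>_def)
      have "\<rho>^k \<le> \<rho>^1" using False rp by (intro power_decreasing) (auto simp: \<rho>_def)
      then have "K * \<rho>^k \<le> K * \<rho>" using K by simp
      also have "\<dots> \<le> K * (\<epsilon> / K)" using K by (intro mult_left_mono) (auto simp: \<rho>_def)
      also have "\<dots> = \<epsilon>" using K by simp
      finally have b: "K * \<rho>^k \<le> \<epsilon>" .
      have "\<rho> \<le> h" "diameter C \<le> \<rho>" using dz rp by (auto simp: \<rho>_def)
      from gen[OF rp this] obtain U where U: "U\<in>sets borel" "shell l h C \<subseteq> U" "emeasure lborel U \<le> ennreal (K * \<rho>^k)"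
        by blast
      have ue: "emeasure lborel U \<le> ennreal \<epsilon>" using U(3) ennreal_leI[OF b] by (rule order_trans)
      have "ennreal (K * diameter C ^ k) = 0" using dz False by (simp add: zero_power)
      then show ?thesis unfolding goal_eq using ue by (intro bexI[of _ U] conjI U(2) U(1)) simp
    qed
  qed
qed

definition KH :: "'a::euclidean_space itself \<Rightarrow> real" where
  "KH _ = 3 * 2^DIM('a) * unit_ball_vol DIM('a) * 2^(DIM('a)-1) / unit_ball_vol (real (DIM('a)-1))"

lemma KH_pos: "0 < KH (TYPE('a::euclidean_space))"
  unfolding KH_def by simp

lemma shell_hw:
  fixes C :: "'a::euclidean_space set"
  assumes "C \<noteq> {}" "l \<ge> 1" "0 < h"
  shows "ennreal (3 * 2^DIM('a) * unit_ball_vol DIM('a) * l * h * diameter C ^ (DIM('a) - 1))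
       = ennreal (KH TYPE('a) * l * h) * hw (DIM('a)-1) C"
proof -
  let ?s = "DIM('a) - 1"
  have w: "unit_ball_vol (real ?s) > 0" by simp
  have rs: "real ?s = real DIM('a) - 1" using DIM_positive[where 'a='a] by (simp add: of_nat_diff)
  have w2: "unit_ball_vol (real DIM('a) - 1) > 0" using w unfolding rs .
  then have w3: "unit_ball_vol (real DIM('a) - 1) \<noteq> 0" by (metis order_less_irrefl)
  have "diameter C ^ ?s = 2^?s * (diameter C / 2)^?s" by (simp add: power_divide)
  then have eq: "3 * 2^DIM('a) * unit_ball_vol DIM('a) * l * h * diameter C ^ ?s
      = (KH TYPE('a) * l * h) * (unit_ball_vol (real ?s) * (diameter C / 2) ^ ?s)"
    unfolding KH_def using w w3 by (simp add: field_simps)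
  have hwC: "hw ?s C = ennreal (unit_ball_vol (real ?s) * (diameter C / 2) ^ ?s)" using assms(1) by (simp add: hw_def)
  show ?thesis unfolding hwC eq by (rule ennreal_mult') (use KH_pos[where 'a='a] assms in simp)
qed

lemma shell_H:
  fixes S :: "'a::euclidean_space set"
  assumes l: "l \<ge> 1" and h: "0 < h" and e: "0 < \<epsilon>"
  shows "\<exists>U\<in>sets borel. shell l h S \<subseteq> U \<and>
     emeasure lborel U \<le> ennreal (KH TYPE('a) * l * h) * hausdorff_outer (DIM('a)-1) S + ennreal \<epsilon>"
proof -
  let ?s = "DIM('a) - 1"
  define c where "c = KH TYPE('a) * l * h"
  have c: "0 < c" unfolding c_def using KH_pos[where 'a='a] l h by simp
  show ?thesis
  proof (cases "hausdorff_outer ?s S = top")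
    case True
    have "ennreal c * top = top" using c by (simp add: ennreal_mult_top)
    then show ?thesis using True unfolding c_def[symmetric] by (intro bexI[of _ UNIV]) auto
  next
    case False
    have pre_fin: "hausdorff_pre ?s h S < top"
      using False hpre_le_outer[OF h, of ?s S] by (simp add: top.not_eq_extremum)
    have e2: "0 < ennreal (\<epsilon> / (2*c))" using e c by simp
    obtain C where C: "C \<in> hcov h S" "(\<Sum>i. hw ?s (C i)) < hausdorff_pre ?s h S + ennreal (\<epsilon> / (2*c))"
      using hpre_close[OF pre_fin e2] by blast
    have "\<forall>i. \<exists>U. U\<in>sets borel \<and> shell l h (C i) \<subseteq> U \<and>
        emeasure lborel U \<le> ennreal c * hw ?s (C i) + ennreal (\<epsilon>/2 * (1/2)^Suc i)"
    proof
      fix i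
      show "\<exists>U. U\<in>sets borel \<and> shell l h (C i) \<subseteq> U \<and>
        emeasure lborel U \<le> ennreal c * hw ?s (C i) + ennreal (\<epsilon>/2 * (1/2)^Suc i)"
      proof (cases "C i = {}")
        case True
        then show ?thesis by (intro exI[of _ "{}"]) (auto simp: shell_def)
      next
        case False
        have Ci: "bounded (C i)" "diameter (C i) \<le> h" using C(1) by (auto simp: hcov_def)
        have ei: "0 < \<epsilon>/2 * (1/2)^Suc i" using e by simp
        from shell_one[OF l h Ci ei] obtain U where "U\<in>sets borel" "shell l h (C i) \<subseteq> U"
          "emeasure lborel U \<le> ennreal (3 * 2^DIM('a) * unit_ball_vol DIM('a) * l * h * diameter (C i) ^ (DIM('a) - 1))
             + ennreal (\<epsilon>/2 * (1/2)^Suc i)" by blast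
        then show ?thesis unfolding shell_hw[OF False l h] c_def by blast
      qed
    qed
    then obtain U where U: "\<And>i. U i \<in> sets borel" "\<And>i. shell l h (C i) \<subseteq> U i"
      "\<And>i. emeasure lborel (U i) \<le> ennreal c * hw ?s (C i) + ennreal (\<epsilon>/2 * (1/2)^Suc i)"
      by metis
    have sub: "shell l h S \<subseteq> (\<Union>i. U i)"
    proof -
      have "shell l h S \<subseteq> shell l h (\<Union>i. C i)" using C(1) by (intro shell_mono) (auto simp: hcov_def)
      also have "\<dots> = (\<Union>i. shell l h (C i))" by (rule shell_UN)
      also have "\<dots> \<subseteq> (\<Union>i. U i)" using U(2) by blast
      finally show ?thesis .
    qed
    have "emeasure lborel (\<Union>i. U i) \<le> (\<Sum>i. emeasure lborel (U i))"
      using U(1) by (intro emeasure_subadditive_countably) auto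
    also have "\<dots> \<le> (\<Sum>i. ennreal c * hw ?s (C i) + ennreal (\<epsilon>/2 * (1/2)^Suc i))"
      by (intro suminf_le summableI U(3))
    also have "\<dots> = ennreal c * (\<Sum>i. hw ?s (C i)) + (\<Sum>i. ennreal (\<epsilon>/2 * (1/2)^Suc i))"
      by (simp add: suminf_add[symmetric] summableI)
    also have "(\<Sum>i. ennreal (\<epsilon>/2 * (1/2)^Suc i)) = ennreal (\<epsilon>/2)"
    proof -
      have "(\<lambda>n. \<epsilon>/2 * (1/2)^Suc n) sums (\<epsilon>/2)"
        using sums_mult[OF geometric_sums[of "1/2::real"], of "\<epsilon>/4"] by (simp add: field_simps)
      then show ?thesis using e by (subst suminf_ennreal2) (auto simp: sums_iff)
    qed
    also have "ennreal c * (\<Sum>i. hw ?s (C i)) \<le> ennreal c * (hausdorff_pre ?s h S + ennreal (\<epsilon> / (2*c)))"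
      using C(2) by (intro mult_left_mono) auto
    also have "\<dots> = ennreal c * hausdorff_pre ?s h S + ennreal (\<epsilon>/2)"
      using c e by (simp add: distrib_left ennreal_mult[symmetric])
    also have "ennreal c * hausdorff_pre ?s h S \<le> ennreal c * hausdorff_outer ?s S"
      by (intro mult_left_mono hpre_le_outer h) auto
    finally have "emeasure lborel (\<Union>i. U i) \<le> ennreal c * hausdorff_outer ?s S + ennreal (\<epsilon>/2) + ennreal (\<epsilon>/2)"
      by (simp add: add_right_mono)
    also have "\<dots> = ennreal c * hausdorff_outer ?s S + ennreal \<epsilon>"
      using e by (simp add: add.assoc ennreal_plus[symmetric])
    finally show ?thesis using sub U(1) unfolding c_def by (intro bexI[of _ "\<Union>i. U i"]) auto
  qed
qed

lemma infdist_lessD: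
  assumes "infdist x A < e" "A \<noteq> {}"
  shows "\<exists>a\<in>A. dist x a < e"
  using assms by (auto simp: infdist_notempty cINF_less_iff)

lemma key_ineq:
  fixes x :: "'a::euclidean_space"
  assumes Y: "convex Y" "ball 0 r \<subseteq> Y" "0 < r" and t: "0 \<le> t" "t \<le> 1" and nY: "t *\<^sub>R x \<notin> Y"
  shows "(1 - t) * r \<le> infdist x Y"
proof (rule ccontr)
  assume "\<not> (1 - t) * r \<le> infdist x Y"
  then have lt: "infdist x Y < (1 - t) * r" by simp
  have "0 \<in> Y" using Y by auto
  then obtain y where y: "y \<in> Y" "dist x y < (1 - t) * r" using infdist_lessD[OF lt] by blast
  have t1: "t < 1" using lt infdist_nonneg[of x Y] Y(3) by (smt (verit) mult_nonpos_nonneg)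
  define z where "z = (t / (1 - t)) *\<^sub>R (x - y)"
  have "norm z = t / (1 - t) * norm (x - y)" using t t1 by (simp add: z_def)
  also have "\<dots> \<le> 1 / (1 - t) * norm (x - y)" using t t1 by (intro mult_right_mono divide_right_mono) auto
  also have "\<dots> < 1 / (1 - t) * ((1 - t) * r)" using y(2) t1 by (intro mult_strict_left_mono) (auto simp: dist_norm)
  also have "\<dots> = r" using t1 by simp
  finally have "z \<in> Y" using Y(2) by auto
  then have "t *\<^sub>R y + (1 - t) *\<^sub>R z \<in> Y" using Y(1) y(1) t by (intro convexD) auto
  moreover have "t *\<^sub>R y + (1 - t) *\<^sub>R z = t *\<^sub>R x"
  proof -
    have c: "(1 - t) * (t / (1 - t)) = t" using t1 by (simp add: field_simps)
    have "(1 - t) *\<^sub>R z = t *\<^sub>R (x - y)" unfolding z_def scaleR_scaleR c ..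
    then show ?thesis by (simp add: algebra_simps)
  qed
  ultimately show False using nY by simp
qed

lemma ray_point:
  fixes p :: "'a::euclidean_space"
  assumes X: "convex X" "bounded X" "0 \<in> interior X" and p: "p \<in> X" "p \<noteq> 0"
  shows "\<exists>x\<in>frontier X. \<exists>t. 0 < t \<and> t \<le> 1 \<and> p = t *\<^sub>R x"
proof -
  obtain d where d: "0 < d" "(0 + d *\<^sub>R p) \<in> frontier X"
    using ray_to_frontier[OF X(2) X(3) p(2)] by blast
  have d1: "1 \<le> d"
  proof (rule ccontr)
    assume "\<not> 1 \<le> d"
    then have d1: "d < 1" by simp
    have "p - (1 - d) *\<^sub>R (p - 0) \<in> interior X"
      using p d d1 closure_subset by (intro mem_interior_closure_convex_shrink[OF X(1) X(3)]) auto
    moreover have "p - (1 - d) *\<^sub>R (p - 0) = d *\<^sub>R p" by (simp add: algebra_simps)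
    ultimately show False using d(2) by (simp add: frontier_def)
  qed
  show ?thesis
    using d d1 by (intro bexI[of _ "d *\<^sub>R p"] exI[of _ "1/d"]) auto
qed

lemma contain:
  fixes X Y :: "'a::euclidean_space set" and l :: real
  assumes l: "l \<ge> 1" and X: "convex X" "ball 0 (1/l) \<subseteq> X" "X \<subseteq> ball 0 l"
    and Y: "convex Y" "ball 0 (1/l) \<subseteq> Y"
  shows "X - Y \<subseteq> frontier X \<union> (\<Union>k. shell l (l^2 * (1/2)^k)
            {x \<in> frontier X. l * (1/2)^Suc k < infdist x Y \<and> infdist x Y \<le> l * (1/2)^k})"
proof
  fix p assume p: "p \<in> X - Y"
  have lpos: "0 < l" using l by simp
  have r: "0 < 1/l" using l by simp
  have Y0: "0 \<in> Y" using Y(2) r by auto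
  have bX: "bounded X" using X(3) bounded_ball bounded_subset by blast
  have iX: "0 \<in> interior X"
  proof -
    have "0 \<in> interior (ball (0::'a) (1/l))" using r by simp
    then show ?thesis using interior_mono[OF X(2)] by blast
  qed
  have p0: "p \<noteq> 0" using p Y0 by auto
  obtain x t where x: "x \<in> frontier X" and t: "0 < t" "t \<le> 1" and pt: "p = t *\<^sub>R x"
    using ray_point[OF X(1) bX iX _ p0] p by blast
  have xn: "norm x \<le> l"
  proof -
    have "frontier X \<subseteq> closure X" by (simp add: frontier_def)
    also have "\<dots> \<subseteq> closure (ball 0 l)" by (rule closure_mono[OF X(3)])
    also have "\<dots> = cball 0 l" using lpos by simp
    finally show ?thesis using x by auto
  qed
  have key: "(1 - t) * (1/l) \<le> infdist x Y"
    using key_ineq[OF Y(1) Y(2) r, of t x] t p pt by auto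
  then have key2: "1 - t \<le> l * infdist x Y" using lpos by (simp add: field_simps)
  have dle: "infdist x Y \<le> l"
    using infdist_le[OF Y0, of x] xn by simp
  show "p \<in> frontier X \<union> (\<Union>k. shell l (l^2 * (1/2)^k)
            {x \<in> frontier X. l * (1/2)^Suc k < infdist x Y \<and> infdist x Y \<le> l * (1/2)^k})"
  proof (cases "infdist x Y = 0")
    case True
    then have "t = 1" using key2 t by simp
    then show ?thesis using pt x by simp
  next
    case False
    then have dpos: "0 < infdist x Y" using infdist_nonneg[of x Y] by simp
    obtain n where n: "(1/2::real)^n < infdist x Y / l" using real_arch_pow_inv[of "infdist x Y / l" "1/2"] dpos lpos by auto
    have ex: "l * (1/2)^Suc n < infdist x Y"
    proof -
      have "l * (1/2)^Suc n \<le> l * (1/2)^n" using lpos by (intro mult_left_mono) (auto simp: power_Suc)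
      also have "\<dots> < infdist x Y" using n lpos by (simp add: field_simps)
      finally show ?thesis .
    qed
    define k where "k = (LEAST k. l * (1/2)^Suc k < infdist x Y)"
    have k1: "l * (1/2)^Suc k < infdist x Y" unfolding k_def by (rule LeastI[of _ n]) (rule ex)
    have k2: "infdist x Y \<le> l * (1/2)^k"
    proof (cases k)
      case 0 then show ?thesis using dle by simp
    next
      case (Suc j)
      have "\<not> l * (1/2)^Suc j < infdist x Y"
        using not_less_Least[of j "\<lambda>k. l * (1/2)^Suc k < infdist x Y"] Suc unfolding k_def by simp
      then show ?thesis using Suc by simp
    qed
    have "1 - t \<le> l^2 * (1/2)^k"
    proof -
      have "l * infdist x Y \<le> l * (l * (1/2)^k)" using k2 lpos by (intro mult_left_mono) auto
      then show ?thesis using key2 by (simp add: power2_eq_square mult.assoc)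
    qed
    then have "p \<in> shell l (l^2 * (1/2)^k)
            {x \<in> frontier X. l * (1/2)^Suc k < infdist x Y \<and> infdist x Y \<le> l * (1/2)^k}"
      unfolding shell_def pt
    proof (intro CollectI exI conjI)
      show "t *\<^sub>R x = t *\<^sub>R x" ..
    qed (use x xn t k1 k2 \<open>1 - t \<le> l^2 * (1/2)^k\<close> in auto)
    then show ?thesis by blast
  qed
qed

lemma main_core:
  fixes X Y :: "'a::euclidean_space set" and l :: real
  assumes l: "l \<ge> 1" and X: "convex X" "ball 0 (1/l) \<subseteq> X" "X \<subseteq> ball 0 l"
    and Y: "convex Y" "ball 0 (1/l) \<subseteq> Y" "Y \<subseteq> ball 0 l"
  shows "emeasure lebesgue (X - Y) \<le> ennreal (2 * KH TYPE('a) * l^2) *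
    (\<integral>\<^sup>+ x \<in> frontier X. ennreal (infdist x Y) \<partial>hausdorff_measure (DIM('a) - 1))"
proof -
  let ?s = "DIM('a) - 1"
  let ?M = "hausdorff_measure ?s :: 'a measure"
  let ?H = "hausdorff_outer ?s :: 'a set \<Rightarrow> ennreal"
  define d where "d x = infdist x Y" for x
  define a where "a k = l * (1/2)^Suc k" for k :: nat
  define S where "S k = {x \<in> frontier X. l * (1/2)^Suc k < infdist x Y \<and> infdist x Y \<le> l * (1/2)^k}" for k :: nat
  define hk where "hk k = l^2 * (1/2)^k" for k :: nat
  have lpos: "0 < l" using l by simp
  have hk: "0 < hk k" for k using lpos by (simp add: hk_def)
  have KH: "0 < KH TYPE('a)" by (rule KH_pos)
  have bX: "bounded X" using X(3) bounded_ball bounded_subset by blast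
  have bY: "bounded Y" using Y(3) bounded_ball bounded_subset by blast
  have cont: "X - Y \<subseteq> frontier X \<union> (\<Union>k. shell l (hk k) (S k))"
    using contain[OF l X Y(1,2)] unfolding S_def hk_def by simp
  have Sk: "S k \<in> sets ?M" for k
  proof -
    have "S k = frontier X \<inter> {x. l * (1/2)^Suc k < infdist x Y} \<inter> {x. infdist x Y \<le> l * (1/2)^k}"
      unfolding S_def by auto
    moreover have "frontier X \<in> sets ?M" by (intro hm_closed) simp
    moreover have "{x. l * (1/2)^Suc k < infdist x Y} \<in> sets ?M"
      by (intro hm_open open_Collect_less continuous_intros)
    moreover have "{x. infdist x Y \<le> l * (1/2)^k} \<in> sets ?M"
      by (intro hm_closed closed_Collect_le continuous_intros)
    ultimately show ?thesis by simp
  qed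
  have XY: "X - Y \<in> sets lebesgue"
    using measurable_convex[OF X(1) bX] measurable_convex[OF Y(1) bY] by auto
  have fX: "frontier X \<in> null_sets lebesgue"
    using negligible_convex_frontier[OF X(1)] by (simp add: negligible_iff_null_sets)
  have meas: "emeasure lebesgue (X - Y) \<le> (\<Sum>k. ennreal (KH TYPE('a) * l * hk k) * ?H (S k))"
  proof (rule ennreal_le_epsilon)
    fix e :: real assume e: "0 < e"
    have "\<forall>k. \<exists>U. U\<in>sets borel \<and> shell l (hk k) (S k) \<subseteq> U \<and>
       emeasure lborel U \<le> ennreal (KH TYPE('a) * l * hk k) * ?H (S k) + ennreal (e * (1/2)^Suc k)"
    proof
      fix k
      have "0 < e * (1/2)^Suc k" using e by simp
      from shell_H[OF l hk[of k] this, where S="S k"] show "\<exists>U. U\<in>sets borel \<and> shell l (hk k) (S k) \<subseteq> U \<and>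
       emeasure lborel U \<le> ennreal (KH TYPE('a) * l * hk k) * ?H (S k) + ennreal (e * (1/2)^Suc k)"
        by blast
    qed
    then obtain U where U: "\<And>k. U k \<in> sets borel" "\<And>k. shell l (hk k) (S k) \<subseteq> U k"
      "\<And>k. emeasure lborel (U k) \<le> ennreal (KH TYPE('a) * l * hk k) * ?H (S k) + ennreal (e * (1/2)^Suc k)"
      by metis
    have Ul: "U k \<in> sets lebesgue" for k using U(1)[of k] by simp
    have Ue: "emeasure lebesgue (U k) = emeasure lborel (U k)" for k using U(1)[of k] by simp
    have sub: "X - Y \<subseteq> frontier X \<union> (\<Union>k. U k)" using cont U(2) by blast
    have fXs: "frontier X \<in> sets lebesgue" using fX by (rule null_setsD2)
    have "emeasure lebesgue (X - Y) \<le> emeasure lebesgue (frontier X \<union> (\<Union>k. U k))"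
      using sub fXs Ul by (intro emeasure_mono) auto
    also have "\<dots> \<le> emeasure lebesgue (frontier X) + emeasure lebesgue (\<Union>k. U k)"
      using Ul fXs by (intro emeasure_subadditive) auto
    also have "emeasure lebesgue (frontier X) = 0" using fX by auto
    also have "emeasure lebesgue (\<Union>k. U k) \<le> (\<Sum>k. emeasure lebesgue (U k))"
      using Ul by (intro emeasure_subadditive_countably) auto
    also have "\<dots> \<le> (\<Sum>k. ennreal (KH TYPE('a) * l * hk k) * ?H (S k) + ennreal (e * (1/2)^Suc k))"
      unfolding Ue by (intro suminf_le summableI U(3))
    also have "\<dots> = (\<Sum>k. ennreal (KH TYPE('a) * l * hk k) * ?H (S k)) + (\<Sum>k. ennreal (e * (1/2)^Suc k))"
      by (simp add: suminf_add[symmetric] summableI)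
    also have "(\<Sum>k. ennreal (e * (1/2)^Suc k)) = ennreal e"
    proof -
      have "(\<lambda>n. e * (1/2)^Suc n) sums e"
        using sums_mult[OF geometric_sums[of "1/2::real"], of "e/2"] by (simp add: field_simps)
      then show ?thesis using e by (subst suminf_ennreal2) (auto simp: sums_iff)
    qed
    finally show "emeasure lebesgue (X - Y) \<le> (\<Sum>k. ennreal (KH TYPE('a) * l * hk k) * ?H (S k)) + ennreal e"
      by simp
  qed
  have eqk: "ennreal (KH TYPE('a) * l * hk k) = ennreal (2 * KH TYPE('a) * l^2) * ennreal (a k)" for k
  proof -
    have "KH TYPE('a) * l * hk k = (2 * KH TYPE('a) * l^2) * a k"
      unfolding hk_def a_def by (simp add: power2_eq_square)
    then show ?thesis using KH lpos by (simp add: a_def ennreal_mult[symmetric])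
  qed
  have "(\<Sum>k. ennreal (KH TYPE('a) * l * hk k) * ?H (S k)) = ennreal (2 * KH TYPE('a) * l^2) * (\<Sum>k. ennreal (a k) * ?H (S k))"
    unfolding eqk by (simp add: mult.assoc)
  also have "(\<Sum>k. ennreal (a k) * ?H (S k)) \<le> (\<integral>\<^sup>+ x \<in> frontier X. ennreal (infdist x Y) \<partial>?M)"
  proof -
    have "(\<Sum>k. ennreal (a k) * ?H (S k)) = (\<Sum>k. \<integral>\<^sup>+ x. ennreal (a k) * indicator (S k) x \<partial>?M)"
      using Sk by (simp add: nn_integral_cmult_indicator hm_emeasure)
    also have "\<dots> = (\<integral>\<^sup>+ x. (\<Sum>k. ennreal (a k) * indicator (S k) x) \<partial>?M)"
      using Sk by (intro nn_integral_suminf[symmetric]) auto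
    also have "\<dots> \<le> (\<integral>\<^sup>+ x \<in> frontier X. ennreal (infdist x Y) \<partial>?M)"
    proof (rule nn_integral_mono)
      fix x
      show "(\<Sum>k. ennreal (a k) * indicator (S k) x) \<le> ennreal (infdist x Y) * indicator (frontier X) x"
      proof (cases "\<exists>j. x \<in> S j")
        case False
        then show ?thesis by simp
      next
        case True
        then obtain j where j: "x \<in> S j" by blast
        have other: "x \<notin> S k" if "k \<noteq> j" for k
        proof
          assume xk: "x \<in> S k"
          have mono: "l * (1/2)^m \<le> l * (1/2)^Suc i" if "i < m" for i m :: nat
            using lpos that by (intro mult_left_mono power_decreasing) auto
          show False
          proof (cases "k < j")
            case True
            then show False using mono[OF True] j xk unfolding S_def by auto
          next
            case False
            then have "j < k" using that by simp
            then show False using mono[OF \<open>j < k\<close>] j xk unfolding S_def by auto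
          qed
        qed
        have "(\<Sum>k. ennreal (a k) * indicator (S k) x) = (\<Sum>k\<in>{j}. ennreal (a k) * indicator (S k) x)"
          by (rule suminf_finite) (auto simp: other)
        also have "\<dots> = ennreal (a j)" using j by simp
        also have "\<dots> \<le> ennreal (infdist x Y)" using j unfolding S_def a_def by (intro ennreal_leI) auto
        also have "\<dots> = ennreal (infdist x Y) * indicator (frontier X) x" using j by (simp add: S_def)
        finally show ?thesis .
      qed
    qed
    finally show ?thesis .
  qed
  finally have "(\<Sum>k. ennreal (KH TYPE('a) * l * hk k) * ?H (S k)) \<le> ennreal (2 * KH TYPE('a) * l^2) *
      (\<integral>\<^sup>+ x \<in> frontier X. ennreal (infdist x Y) \<partial>?M)"
    by (simp add: mult_left_mono)
  with meas show ?thesis by (rule order_trans)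
qed

theorem mainTheorem7:
  fixes l :: real
  assumes "l \<ge> 1"
  shows "\<exists>c>0. \<forall>X Y :: 'a::euclidean_space set.
           convex X \<longrightarrow> convex Y \<longrightarrow>
           emeasure lebesgue X = emeasure lebesgue Y \<longrightarrow>
           ball 0 (1/l) \<subseteq> X \<longrightarrow> X \<subseteq> ball 0 l \<longrightarrow>
           ball 0 (1/l) \<subseteq> Y \<longrightarrow> Y \<subseteq> ball 0 l \<longrightarrow>
           emeasure lebesgue ((X - Y) \<union> (Y - X))
             \<le> ennreal c * (\<integral>\<^sup>+ x \<in> frontier X. ennreal (infdist x Y)
                              \<partial>hausdorff_measure (DIM('a) - 1))"
proof -
  define c where "c = 4 * KH TYPE('a) * l^2"
  have KH: "0 < KH TYPE('a)" by (rule KH_pos)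
  have cpos: "0 < c" using KH assms by (simp add: c_def)
  show ?thesis
  proof (intro exI[of _ c] conjI allI impI cpos)
    fix X Y :: "'a set"
    assume cX: "convex X" and cY: "convex Y" and vol: "emeasure lebesgue X = emeasure lebesgue Y"
      and X1: "ball 0 (1/l) \<subseteq> X" and X2: "X \<subseteq> ball 0 l"
      and Y1: "ball 0 (1/l) \<subseteq> Y" and Y2: "Y \<subseteq> ball 0 l"
    have bX: "bounded X" using X2 bounded_ball bounded_subset by blast
    have bY: "bounded Y" using Y2 bounded_ball bounded_subset by blast
    have mX: "X \<in> sets lebesgue" "emeasure lebesgue X < top"
      using measurable_convex[OF cX bX] by (auto simp: fmeasurable_def)
    have mY: "Y \<in> sets lebesgue" "emeasure lebesgue Y < top"
      using measurable_convex[OF cY bY] by (auto simp: fmeasurable_def)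
    have e1: "emeasure lebesgue X = emeasure lebesgue (X \<inter> Y) + emeasure lebesgue (X - Y)"
    proof -
      have u: "(X \<inter> Y) \<union> (X - Y) = X" by auto
      have "emeasure lebesgue (X \<inter> Y) + emeasure lebesgue (X - Y) = emeasure lebesgue ((X \<inter> Y) \<union> (X - Y))"
        using mX mY by (intro plus_emeasure) auto
      then show ?thesis unfolding u by simp
    qed
    have e2: "emeasure lebesgue Y = emeasure lebesgue (X \<inter> Y) + emeasure lebesgue (Y - X)"
    proof -
      have u: "(X \<inter> Y) \<union> (Y - X) = Y" by auto
      have "emeasure lebesgue (X \<inter> Y) + emeasure lebesgue (Y - X) = emeasure lebesgue ((X \<inter> Y) \<union> (Y - X))"
        using mX mY by (intro plus_emeasure) auto
      then show ?thesis unfolding u by simp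
    qed
    have fin: "emeasure lebesgue (X \<inter> Y) \<noteq> top"
    proof -
      have "emeasure lebesgue (X \<inter> Y) \<le> emeasure lebesgue X" using mX mY by (intro emeasure_mono) auto
      then show ?thesis using mX(2) by (simp add: top.not_eq_extremum)
    qed
    have sym: "emeasure lebesgue (X - Y) = emeasure lebesgue (Y - X)"
      using e1 e2 vol fin by (simp add: ennreal_add_left_cancel)
    have "emeasure lebesgue ((X - Y) \<union> (Y - X)) = emeasure lebesgue (X - Y) + emeasure lebesgue (Y - X)"
      using mX mY by (intro plus_emeasure[symmetric]) auto
    also have "\<dots> = 2 * emeasure lebesgue (X - Y)" using sym by (simp add: mult_2)
    also have "\<dots> \<le> 2 * (ennreal (2 * KH TYPE('a) * l^2) *
        (\<integral>\<^sup>+ x \<in> frontier X. ennreal (infdist x Y) \<partial>hausdorff_measure (DIM('a) - 1)))"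
      by (intro mult_left_mono main_core[OF assms cX X1 X2 cY Y1 Y2]) auto
    also have "\<dots> = ennreal c * (\<integral>\<^sup>+ x \<in> frontier X. ennreal (infdist x Y) \<partial>hausdorff_measure (DIM('a) - 1))"
    proof -
      have "2 * ennreal (2 * KH TYPE('a) * l^2) = ennreal c"
        unfolding c_def using KH by (simp add: ennreal_mult[symmetric] ennreal_numeral[symmetric] del: ennreal_numeral)
      then show ?thesis by (simp add: mult.assoc[symmetric])
    qed
    finally show "emeasure lebesgue ((X - Y) \<union> (Y - X))
             \<le> ennreal c * (\<integral>\<^sup>+ x \<in> frontier X. ennreal (infdist x Y) \<partial>hausdorff_measure (DIM('a) - 1))" .
  qed
qed

end
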